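(* Consider the multi-market oligopoly of equal capacity $\mathcal{G}$ described in the context, and suppose: each $u_x$ ($x\in E$) is concave and differentiable; $c$ is convex and differentiable; and at least one of the following holds: (a) all but at most one of the $u_x$ are strictly concave, or (b) $c$ is strictly convex. Then $\mathcal{G}$ has a pure-strategy Nash equilibrium, and every pure-strategy Nash equilibrium of $\mathcal{G}$ is strict.
   Context: Let $N=\{1,\dots,n\}$ be a set of firms (players) and $E=\{1,\dots,m\}$ a set of markets. Let $\Delta^{m-1}=\{\mathbf{v}\in\mathbb{R}^m:\mathbf{v}\ge 0,\ \mathbf{v}^{T}\mathbf{1}=1\}$. Each firm $i$ chooses a strategy $\mathbf{s}_i=(s_{ix})_{x=1}^m\in S_i=\Delta^{m-1}$. For each market $x$ let $u_x:\mathbb{R}_{\ge 0}\to\mathbb{R}_{\ge 0}$ with $u_x(0)=0$, and let $p_x(t)=u_x(t)/t$ for $t>0$. Let $c:\Delta^{m-1}\to\mathbb{R}_{\ge 0}$ be a common cost function. For a strategy profile $\mathbf{S}=(\mathbf{s}_i)_{i=1}^n$ put $s_x=\sum_{i=1}^n s_{ix}$ and $\mathbf{s}_{-i}=\sum_{j\ne i}\mathbf{s}_j$. The payoff of player $i$ is $u_i(\mathbf{s}_i;\mathbf{s}_{-i})=\sum_{x=1}^m p_x(s_x)s_{ix}-c(\mathbf{s}_i)$ (a term with $s_x=0$ is taken to be $0$). The game is $\mathcal{G}=(N,S,(u_i)_{i=1}^n)$ with $S=\prod_{i=1}^n\Delta^{m-1}$. A Nash equilibrium is strict if each player's equilibrium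 strategy is its unique best response to the others' equilibrium strategies. *)

theory Defs
  imports "HOL-Analysis.Analysis"
begin

text \<open>Players are indexed by a finite type 'n, markets by a finite type 'm.
  A strategy is a vector in real^'m lying in the standard std_simplex.\<close>

definition std_simplex :: "(real^'m::finite) set" where
  "std_simplex = {v. (\<forall>x. 0 \<le> v $ x) \<and> (\<Sum>x\<in>UNIV. v $ x) = 1}"

definition strict_convex_on :: "'a::real_vector set \<Rightarrow> ('a \<Rightarrow> real) \<Rightarrow> bool" where
  "strict_convex_on S f \<longleftrightarrow> convex S \<and>
    (\<forall>x\<in>S. \<forall>y\<in>S. \<forall>t. x \<noteq> y \<and> 0 < t \<and> t < 1 \<longrightarrow>
       f ((1 - t) *\<^sub>R x + t *\<^sub>R y) < (1 - t) * f x + t * f y)"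

definition strict_concave_on :: "'a::real_vector set \<Rightarrow> ('a \<Rightarrow> real) \<Rightarrow> bool" where
  "strict_concave_on S f \<longleftrightarrow> strict_convex_on S (\<lambda>x. - f x)"

text \<open>Price p_x(t) = u_x(t)/t (division by 0 gives 0, matching the convention that
  a term with s_x = 0 is 0).\<close>
definition price :: "('m \<Rightarrow> real \<Rightarrow> real) \<Rightarrow> 'm \<Rightarrow> real \<Rightarrow> real" where
  "price u x t = u x t / t"

definition total_load :: "('n::finite \<Rightarrow> real^'m::finite) \<Rightarrow> 'm \<Rightarrow> real" where
  "total_load S x = (\<Sum>j\<in>UNIV. S j $ x)"

definition payoff ::
  "('m::finite \<Rightarrow> real \<Rightarrow> real) \<Rightarrow> (real^'m \<Rightarrow> real) \<Rightarrow> 'n::finite \<Rightarrow> ('n \<Rightarrow> real^'m) \<Rightarrow> real" where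
  "payoff u c i S = (\<Sum>x\<in>UNIV. price u x (total_load S x) * S i $ x) - c (S i)"

definition is_NE ::
  "('m::finite \<Rightarrow> real \<Rightarrow> real) \<Rightarrow> (real^'m \<Rightarrow> real) \<Rightarrow> ('n::finite \<Rightarrow> real^'m) \<Rightarrow> bool" where
  "is_NE u c S \<longleftrightarrow> (\<forall>i. S i \<in> std_simplex) \<and>
     (\<forall>i. \<forall>t\<in>std_simplex. payoff u c i (S(i := t)) \<le> payoff u c i S)"

definition is_strict_NE ::
  "('m::finite \<Rightarrow> real \<Rightarrow> real) \<Rightarrow> (real^'m \<Rightarrow> real) \<Rightarrow> ('n::finite \<Rightarrow> real^'m) \<Rightarrow> bool" where
  "is_strict_NE u c S \<longleftrightarrow> is_NE u c S \<and>
     (\<forall>i. \<forall>t\<in>std_simplex. payoff u c i (S(i := t)) \<ge> payoff u c i S \<longrightarrow> t = S i)"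

end

theory Submission
  imports Defs
begin


lemma concave_deriv_ineq:
  fixes f f' :: "real \<Rightarrow> real"
  assumes xy: "x < y" and th: "0 < \<theta>" "\<theta> < 1"
    and der: "\<And>z. x \<le> z \<Longrightarrow> z \<le> y \<Longrightarrow> (f has_real_derivative f' z) (at z)"
    and mono: "\<And>s t. x < s \<Longrightarrow> s < t \<Longrightarrow> t < y \<Longrightarrow> f' t \<le> f' s"
  shows "(1-\<theta>)*f x + \<theta>*f y \<le> f ((1-\<theta>)*x + \<theta>*y)"
proof -
  define z where "z = (1-\<theta>)*x + \<theta>*y"
  have xz: "x < z" using xy th by (simp add: z_def algebra_simps)
  have "0 < (1-\<theta>)*(y-x)" using xy th by simp
  then have zy: "z < y" by (simp add: z_def algebra_simps)
  obtain \<xi> where \<xi>: "x < \<xi>" "\<xi> < z" "f z - f x = (z - x) * f' \<xi>"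
    using MVT2[OF xz, of f f'] der zy by auto
  obtain \<eta> where \<eta>: "z < \<eta>" "\<eta> < y" "f y - f z = (y - z) * f' \<eta>"
    using MVT2[OF zy, of f f'] der xz by auto
  have m: "f' \<eta> \<le> f' \<xi>" using mono \<xi> \<eta> by auto
  have e1: "z - x = \<theta> * (y - x)" "y - z = (1-\<theta>)*(y-x)" by (simp_all add: z_def algebra_simps)
  have "(f y - f z) * \<theta> \<le> (f z - f x) * (1-\<theta>)"
  proof -
    have "(f y - f z) * \<theta> = (1-\<theta>)*\<theta>*(y-x) * f' \<eta>" using \<eta> e1 by simp
    also have "\<dots> \<le> (1-\<theta>)*\<theta>*(y-x) * f' \<xi>" using m th xy by (intro mult_left_mono) auto
    also have "\<dots> = (f z - f x) * (1-\<theta>)" using \<xi> e1 by simp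
    finally show ?thesis .
  qed
  then show ?thesis unfolding z_def[symmetric] by (simp add: algebra_simps)
qed

lemma concave_deriv_ineq_strict:
  fixes f f' :: "real \<Rightarrow> real"
  assumes xy: "x < y" and th: "0 < \<theta>" "\<theta> < 1"
    and der: "\<And>z. x \<le> z \<Longrightarrow> z \<le> y \<Longrightarrow> (f has_real_derivative f' z) (at z)"
    and mono: "\<And>s t. x < s \<Longrightarrow> s < t \<Longrightarrow> t < y \<Longrightarrow> f' t < f' s"
  shows "(1-\<theta>)*f x + \<theta>*f y < f ((1-\<theta>)*x + \<theta>*y)"
proof -
  define z where "z = (1-\<theta>)*x + \<theta>*y"
  have xz: "x < z" using xy th by (simp add: z_def algebra_simps)
  have "0 < (1-\<theta>)*(y-x)" using xy th by simp
  then have zy: "z < y" by (simp add: z_def algebra_simps)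
  obtain \<xi> where \<xi>: "x < \<xi>" "\<xi> < z" "f z - f x = (z - x) * f' \<xi>"
    using MVT2[OF xz, of f f'] der zy by auto
  obtain \<eta> where \<eta>: "z < \<eta>" "\<eta> < y" "f y - f z = (y - z) * f' \<eta>"
    using MVT2[OF zy, of f f'] der xz by auto
  have m: "f' \<eta> < f' \<xi>" using mono \<xi> \<eta> by auto
  have e1: "z - x = \<theta> * (y - x)" "y - z = (1-\<theta>)*(y-x)" by (simp_all add: z_def algebra_simps)
  have "(f y - f z) * \<theta> < (f z - f x) * (1-\<theta>)"
  proof -
    have "(f y - f z) * \<theta> = (1-\<theta>)*\<theta>*(y-x) * f' \<eta>" using \<eta> e1 by simp
    also have "\<dots> < (1-\<theta>)*\<theta>*(y-x) * f' \<xi>" using m th xy by (intro mult_strict_left_mono) auto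
    also have "\<dots> = (f z - f x) * (1-\<theta>)" using \<xi> e1 by simp
    finally show ?thesis .
  qed
  then show ?thesis unfolding z_def[symmetric] by (simp add: algebra_simps)
qed



lemma strict_concave_onD:
  assumes "strict_concave_on S f" "x \<in> S" "y \<in> S" "x \<noteq> y" "0 < t" "t < 1"
  shows "- f ((1 - t) *\<^sub>R x + t *\<^sub>R y) < (1 - t) * (- f x) + t * (- f y)"
  using assms unfolding strict_concave_on_def strict_convex_on_def by blast

lemma strict_convex_onD:
  assumes "strict_convex_on S f" "x \<in> S" "y \<in> S" "x \<noteq> y" "0 < t" "t < 1"
  shows "f ((1 - t) *\<^sub>R x + t *\<^sub>R y) < (1 - t) * f x + t * f y"
  using assms unfolding strict_convex_on_def by blast

lemma tangent_facts:
  fixes U :: "real \<Rightarrow> real"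
  assumes conc: "concave_on {0..} U" and diff: "U differentiable_on {0..}"
    and y: "y > 0" and w: "w \<ge> 0"
  shows "(U has_real_derivative deriv U y) (at y)"
    and "U w - U y \<le> deriv U y * (w - y)"
proof -
  have "U differentiable (at y within {0..})" using diff y by (simp add: differentiable_on_def)
  moreover have "at y within {0..} = at y" using y by (intro at_within_interior) simp
  ultimately have "U differentiable (at y)" by simp
  then show d: "(U has_real_derivative deriv U y) (at y)"
    using DERIV_deriv_iff_real_differentiable by blast
  have dm: "((\<lambda>x. - U x) has_real_derivative - deriv U y) (at y within {0..})"
    by (rule has_field_derivative_at_within) (rule DERIV_minus[OF d])
  have yi: "y \<in> interior {0..}" using y by simp
  have "- U w - (- U y) \<ge> (- deriv U y) * (w - y)"
    using convex_on_imp_above_tangent[of "{0..}" "\<lambda>x. - U x" y w "- deriv U y", OF conc[unfolded concave_on_def] connected_Ici yi _ dm] w by simp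
  then show "U w - U y \<le> deriv U y * (w - y)" by (simp add: algebra_simps)
qed

lemma deriv_antimono:
  fixes U :: "real \<Rightarrow> real"
  assumes conc: "concave_on {0..} U" and diff: "U differentiable_on {0..}"
    and y: "0 < y1" "y1 < y2"
  shows "deriv U y2 \<le> deriv U y1"
proof -
  have "U y2 - U y1 \<le> deriv U y1 * (y2 - y1)" using tangent_facts[OF conc diff, of y1 y2] y by auto
  moreover have "U y1 - U y2 \<le> deriv U y2 * (y1 - y2)" using tangent_facts[OF conc diff, of y2 y1] y by auto
  ultimately have "deriv U y2 * (y2 - y1) \<le> deriv U y1 * (y2 - y1)" by (simp add: algebra_simps)
  then show ?thesis using y by simp
qed

lemma deriv_antimono_strict:
  fixes U :: "real \<Rightarrow> real"
  assumes conc: "concave_on {0..} U" and diff: "U differentiable_on {0..}"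
    and sc: "strict_concave_on {0..} U"
    and y: "0 < y1" "y1 < y2"
  shows "deriv U y2 < deriv U y1"
proof -
  define m where "m = (y1 + y2)/2"
  have m: "0 < m" "m - y1 = (y2 - y1)/2" "y2 - m = (y2 - y1)/2" using y by (auto simp: m_def field_simps)
  have "U m - U y1 \<le> deriv U y1 * (m - y1)" by (rule tangent_facts(2)[OF conc diff]) (use y m in auto)
  moreover have "U m - U y2 \<le> deriv U y2 * (m - y2)" by (rule tangent_facts(2)[OF conc diff]) (use y m in auto)
  moreover have "- U ((1 - 1/2) *\<^sub>R y1 + (1/2) *\<^sub>R y2) < (1 - 1/2) * (- U y1) + (1/2) * (- U y2)"
    by (rule strict_concave_onD[OF sc]) (use y in auto)
  then have "U y1 + U y2 < 2 * U m" by (simp add: m_def add_divide_distrib)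
  moreover have "m - y2 = - ((y2 - y1)/2)" using m(3) by linarith
  ultimately have "deriv U y2 * ((y2 - y1)/2) < deriv U y1 * ((y2 - y1)/2)" using m(2) by (simp only: mult_minus_right)
  then show ?thesis using y by simp
qed



definition Fm :: "(real \<Rightarrow> real) \<Rightarrow> real \<Rightarrow> real \<Rightarrow> real" where
  "Fm U a t = U (t + a) / (t + a) * t"

lemma aux1: fixes y d U t :: real assumes "y > 0"
  shows "(d*1*y - U*(1+0))/(y*y) * t + 1*(U/y) = d + (y - t)*(U - y*d)/y^2"
proof -
  have "y*y \<noteq> 0" "y^2 \<noteq> 0" using assms by auto
  then show ?thesis using assms by (simp add: field_simps power2_eq_square)
qed

lemma Fm_deriv:
  fixes U :: "real \<Rightarrow> real"
  assumes conc: "concave_on {0..} U" and diff: "U differentiable_on {0..}"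
    and ta: "t + a > 0"
  shows "(Fm U a has_real_derivative
     (deriv U (t+a) + a * (U (t+a) - (t+a) * deriv U (t+a)) / (t+a)^2)) (at t)"
proof -
  have dU0: "(U has_real_derivative deriv U (t+a)) (at (t+a))"
    using tangent_facts(1)[OF conc diff ta, of 0] by simp
  have dU: "((\<lambda>t. U (t+a)) has_real_derivative deriv U (t+a) * 1) (at t)"
    by (rule DERIV_chain2[where f=U and g="\<lambda>t. t+a" and x=t, OF dU0]) (auto intro!: derivative_eq_intros)
  have dg: "((\<lambda>t. t + a) has_real_derivative 1 + 0) (at t)" by (intro derivative_intros)
  have q: "((\<lambda>t. U (t+a) / (t+a)) has_real_derivative
      (deriv U (t+a) * 1 * (t+a) - U (t+a) * (1+0)) / ((t+a)*(t+a))) (at t)"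
    by (rule DERIV_divide[OF dU dg]) (use ta in simp)
  have "((\<lambda>t. U (t+a) / (t+a) * t) has_real_derivative
     (deriv U (t+a) * 1 * (t+a) - U (t+a) * (1+0)) / ((t+a)*(t+a)) * t + 1 * (U (t+a) / (t+a))) (at t)"
    by (rule DERIV_mult[OF q DERIV_ident])
  moreover have "(deriv U (t+a) * 1 * (t+a) - U (t+a) * (1+0)) / ((t+a)*(t+a)) * t + 1 * (U (t+a) / (t+a))
     = deriv U (t+a) + a * (U (t+a) - (t+a) * deriv U (t+a)) / (t+a)^2"
    using aux1[OF ta, of "deriv U (t+a)" "U (t+a)" t] by simp
  ultimately show ?thesis unfolding Fm_def[abs_def] by simp
qed

lemma Fm_Dmono:
  fixes U :: "real \<Rightarrow> real"
  assumes U0: "U 0 = 0" and conc: "concave_on {0..} U" and diff: "U differentiable_on {0..}"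
    and a: "a > 0" and st: "0 \<le> s" "s < t"
  defines "D \<equiv> \<lambda>t. deriv U (t+a) + a * (U (t+a) - (t+a) * deriv U (t+a)) / (t+a)^2"
  shows "D t \<le> D s" and "strict_concave_on {0..} U \<Longrightarrow> D t < D s"
proof -
  define y1 where "y1 = s + a"
  define y2 where "y2 = t + a"
  define d1 where "d1 = deriv U y1"
  define d2 where "d2 = deriv U y2"
  define h1 where "h1 = U y1 - y1 * d1"
  define h2 where "h2 = U y2 - y2 * d2"
  have y: "0 < y1" "y1 < y2" "a < y2" using a st by (auto simp: y1_def y2_def)
  have Ds: "D s = d1 + a * h1 / y1^2" "D t = d2 + a * h2 / y2^2"
    by (simp_all add: D_def y1_def y2_def d1_def d2_def h1_def h2_def)
  have dd: "d2 \<le> d1" unfolding d1_def d2_def by (rule deriv_antimono[OF conc diff y(1,2)])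
  have h1: "0 \<le> h1"
    using tangent_facts(2)[OF conc diff y(1), of 0] U0 by (simp add: h1_def d1_def algebra_simps)
  have "U y2 - U y1 \<le> d1 * (y2 - y1)"
    using tangent_facts(2)[OF conc diff y(1), of y2] y by (simp add: d1_def)
  then have h2: "h2 \<le> h1 + y2 * (d1 - d2)"
    unfolding h1_def h2_def by (simp add: algebra_simps)
  have e1: "a * h2 / y2^2 \<le> a * h1 / y2^2 + (a / y2) * (d1 - d2)"
  proof -
    have "a * h2 / y2^2 \<le> a * (h1 + y2 * (d1 - d2)) / y2^2"
      using h2 a by (intro divide_right_mono mult_left_mono) auto
    also have "\<dots> = a * h1 / y2^2 + (a / y2) * (d1 - d2)"
      using y by (simp add: field_simps power2_eq_square)
    finally show ?thesis .
  qed
  have e2: "a * h1 / y2^2 \<le> a * h1 / y1^2"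
    using y a h1 by (intro divide_left_mono mult_nonneg_nonneg mult_pos_pos power_strict_mono[THEN less_imp_le]) auto
  have ay: "a / y2 < 1" using y a by simp
  have e3: "(a / y2) * (d1 - d2) \<le> d1 - d2"
    using ay dd by (metis diff_ge_0_iff_ge less_eq_real_def mult_left_le_one_le a y2_def y(3) divide_nonneg_pos less_trans)
  show "D t \<le> D s" using Ds e1 e2 e3 dd by linarith
  assume sc: "strict_concave_on {0..} U"
  have dd': "d2 < d1" unfolding d1_def d2_def by (rule deriv_antimono_strict[OF conc diff sc y(1,2)])
  have e3': "(a / y2) * (d1 - d2) < d1 - d2"
    using mult_strict_right_mono[OF ay, of "d1 - d2"] dd' by simp
  show "D t < D s" using Ds e1 e2 e3' dd by linarith
qed



lemma Fm_zero: "t \<ge> 0 \<Longrightarrow> U 0 = 0 \<Longrightarrow> Fm U 0 t = U t"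
  by (cases "t = 0") (auto simp: Fm_def)

lemma Fm_concave_ord:
  fixes U :: "real \<Rightarrow> real"
  assumes U0: "U 0 = 0" and conc: "concave_on {0..} U" and diff: "U differentiable_on {0..}"
    and a: "a \<ge> 0" and xy: "0 \<le> x" "x < y" and th: "0 < \<theta>" "\<theta> < 1"
  shows "(1-\<theta>)*Fm U a x + \<theta>*Fm U a y \<le> Fm U a ((1-\<theta>)*x + \<theta>*y)"
    and "strict_concave_on {0..} U \<Longrightarrow> (1-\<theta>)*Fm U a x + \<theta>*Fm U a y < Fm U a ((1-\<theta>)*x + \<theta>*y)"
proof -
  have z0: "0 \<le> (1-\<theta>)*x + \<theta>*y" using xy th by simp
  have "(1-\<theta>)*Fm U a x + \<theta>*Fm U a y \<le> Fm U a ((1-\<theta>)*x + \<theta>*y) \<and>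
    (strict_concave_on {0..} U \<longrightarrow> (1-\<theta>)*Fm U a x + \<theta>*Fm U a y < Fm U a ((1-\<theta>)*x + \<theta>*y))"
  proof (cases "a = 0")
    case True
    have "- U ((1 - \<theta>) *\<^sub>R x + \<theta> *\<^sub>R y) \<le> (1 - \<theta>) * (- U x) + \<theta> * (- U y)"
      by (rule convex_onD[OF conc[unfolded concave_on_def]]) (use xy th in auto)
    moreover have "strict_concave_on {0..} U \<Longrightarrow>
        - U ((1 - \<theta>) *\<^sub>R x + \<theta> *\<^sub>R y) < (1 - \<theta>) * (- U x) + \<theta> * (- U y)"
      by (rule strict_concave_onD) (use xy th in auto)
    ultimately show ?thesis using True Fm_zero[of "(1-\<theta>)*x+\<theta>*y" U, OF z0 U0] Fm_zero[of x U, OF xy(1) U0] Fm_zero[of y U, OF _ U0] xy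
      by auto
  next
    case False
    then have a': "a > 0" using a by simp
    define D where "D \<equiv> \<lambda>t. deriv U (t+a) + a * (U (t+a) - (t+a) * deriv U (t+a)) / (t+a)^2"
    have der: "\<And>z. x \<le> z \<Longrightarrow> z \<le> y \<Longrightarrow> (Fm U a has_real_derivative D z) (at z)"
      unfolding D_def by (rule Fm_deriv[OF conc diff]) (use xy a' in auto)
    have "(1-\<theta>)*Fm U a x + \<theta>*Fm U a y \<le> Fm U a ((1-\<theta>)*x + \<theta>*y)"
      by (rule concave_deriv_ineq[OF xy(2) th der]) (use Fm_Dmono(1)[OF U0 conc diff a'] xy in \<open>auto simp: D_def\<close>)
    moreover have "strict_concave_on {0..} U \<Longrightarrow> (1-\<theta>)*Fm U a x + \<theta>*Fm U a y < Fm U a ((1-\<theta>)*x + \<theta>*y)"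
      by (rule concave_deriv_ineq_strict[OF xy(2) th der]) (use Fm_Dmono(2)[OF U0 conc diff a'] xy in \<open>auto simp: D_def\<close>)
    ultimately show ?thesis by blast
  qed
  then show "(1-\<theta>)*Fm U a x + \<theta>*Fm U a y \<le> Fm U a ((1-\<theta>)*x + \<theta>*y)"
    and "strict_concave_on {0..} U \<Longrightarrow> (1-\<theta>)*Fm U a x + \<theta>*Fm U a y < Fm U a ((1-\<theta>)*x + \<theta>*y)"
    by blast+
qed

lemma Fm_concave:
  fixes U :: "real \<Rightarrow> real"
  assumes U0: "U 0 = 0" and conc: "concave_on {0..} U" and diff: "U differentiable_on {0..}"
    and a: "a \<ge> 0" and xy: "0 \<le> x" "0 \<le> y" and th: "0 < \<theta>" "\<theta> < 1"
  shows "(1-\<theta>)*Fm U a x + \<theta>*Fm U a y \<le> Fm U a ((1-\<theta>)*x + \<theta>*y)"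
    and "strict_concave_on {0..} U \<Longrightarrow> x \<noteq> y \<Longrightarrow> (1-\<theta>)*Fm U a x + \<theta>*Fm U a y < Fm U a ((1-\<theta>)*x + \<theta>*y)"
proof -
  have th': "0 < 1 - \<theta>" "1 - \<theta> < 1" using th by auto
  have sw: "(1 - (1-\<theta>))*y + (1-\<theta>)*x = (1-\<theta>)*x + \<theta>*y" "(1 - (1-\<theta>)) * Fm U a y + (1-\<theta>) * Fm U a x = (1-\<theta>)*Fm U a x + \<theta>*Fm U a y" by auto
  show "(1-\<theta>)*Fm U a x + \<theta>*Fm U a y \<le> Fm U a ((1-\<theta>)*x + \<theta>*y)"
  proof (cases x y rule: linorder_cases)
    case less then show ?thesis using Fm_concave_ord(1)[OF U0 conc diff a xy(1) less th] by simp
  next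
    case equal then show ?thesis by (simp add: algebra_simps)
  next
    case greater then show ?thesis using Fm_concave_ord(1)[OF U0 conc diff a xy(2) greater th'] sw by (simp add: ac_simps)
  qed
  assume sc: "strict_concave_on {0..} U" and ne: "x \<noteq> y"
  show "(1-\<theta>)*Fm U a x + \<theta>*Fm U a y < Fm U a ((1-\<theta>)*x + \<theta>*y)"
  proof (cases x y rule: linorder_cases)
    case less then show ?thesis using Fm_concave_ord(2)[OF U0 conc diff a xy(1) less th sc] by simp
  next
    case equal then show ?thesis using ne by simp
  next
    case greater then show ?thesis using Fm_concave_ord(2)[OF U0 conc diff a xy(2) greater th' sc] sw by (simp add: ac_simps)
  qed
qed



lemma simplex_nonneg: "p \<in> std_simplex \<Longrightarrow> 0 \<le> p $ x"
  by (simp add: std_simplex_def)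

lemma simplex_sum: "p \<in> std_simplex \<Longrightarrow> (\<Sum>x\<in>UNIV. p $ x) = 1"
  by (simp add: std_simplex_def)

lemma simplex_comb:
  assumes "p \<in> std_simplex" "q \<in> std_simplex" "0 \<le> \<theta>" "\<theta> \<le> 1"
  shows "(1-\<theta>) *\<^sub>R p + \<theta> *\<^sub>R q \<in> std_simplex"
proof -
  have "(\<Sum>x\<in>UNIV. ((1-\<theta>) *\<^sub>R p + \<theta> *\<^sub>R q) $ x) = (1-\<theta>) * (\<Sum>x\<in>UNIV. p $ x) + \<theta> * (\<Sum>x\<in>UNIV. q $ x)"
    by (simp add: sum.distrib sum_distrib_left)
  also have "\<dots> = 1" using assms by (simp add: simplex_sum)
  finally show ?thesis using assms by (auto simp: std_simplex_def intro!: add_nonneg_nonneg mult_nonneg_nonneg)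
qed

lemma simplex_two_diff:
  fixes p q :: "real^'m::finite"
  assumes "p \<in> std_simplex" "q \<in> std_simplex" "p \<noteq> q"
  shows "\<exists>x y. x \<noteq> y \<and> p $ x \<noteq> q $ x \<and> p $ y \<noteq> q $ y"
proof (rule ccontr)
  assume H: "\<not> ?thesis"
  obtain x where x: "p $ x \<noteq> q $ x" using assms(3) by (auto simp: vec_eq_iff)
  have oth: "\<And>y. y \<noteq> x \<Longrightarrow> p $ y = q $ y" using H x by blast
  have "(\<Sum>y\<in>UNIV. p $ y) = p $ x + (\<Sum>y\<in>UNIV-{x}. p $ y)" by (simp add: sum.remove)
  moreover have "(\<Sum>y\<in>UNIV. q $ y) = q $ x + (\<Sum>y\<in>UNIV-{x}. q $ y)" by (simp add: sum.remove)
  moreover have "(\<Sum>y\<in>UNIV-{x}. p $ y) = (\<Sum>y\<in>UNIV-{x}. q $ y)" by (rule sum.cong) (auto simp: oth)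
  ultimately show False using x assms(1,2) by (simp add: simplex_sum)
qed

definition oth :: "('n::finite \<Rightarrow> real^'m::finite) \<Rightarrow> 'n \<Rightarrow> 'm \<Rightarrow> real" where
  "oth S i x = (\<Sum>j\<in>UNIV-{i}. S j $ x)"

lemma payoff_upd:
  "payoff u c i (S(i:=t)) = (\<Sum>x\<in>UNIV. Fm (u x) (oth S i x) (t $ x)) - c t"
proof -
  have "\<And>x. total_load (S(i:=t)) x = t $ x + oth S i x"
    unfolding total_load_def oth_def
    by (subst sum.remove[of UNIV i]) (auto intro!: sum.cong)
  then show ?thesis by (simp add: payoff_def price_def Fm_def)
qed

locale market =
  fixes u :: "'m::finite \<Rightarrow> real \<Rightarrow> real" and c :: "real^'m \<Rightarrow> real"
  assumes u0: "\<And>x. u x 0 = 0"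
    and u_concave: "\<And>x. concave_on {0..} (u x)"
    and u_diff: "\<And>x. u x differentiable_on {0..}"
    and c_convex: "convex_on std_simplex c"
    and c_diff: "c differentiable_on std_simplex"
    and strictness: "card {x. \<not> strict_concave_on {0..} (u x)} \<le> 1
                     \<or> strict_convex_on std_simplex c"
begin

lemma payoff_strict:
  fixes S :: "'n::finite \<Rightarrow> real^'m"
  assumes S: "\<And>j x. 0 \<le> S j $ x"
    and pq: "p \<in> std_simplex" "q \<in> std_simplex" "p \<noteq> q" and th: "0 < \<theta>" "\<theta> < 1"
  shows "(1-\<theta>) * payoff u c i (S(i:=p)) + \<theta> * payoff u c i (S(i:=q))
         < payoff u c i (S(i:=(1-\<theta>) *\<^sub>R p + \<theta> *\<^sub>R q))"
proof -
  define F where "F = (\<lambda>x s. Fm (u x) (oth S i x) s)"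
  have a: "\<And>x. 0 \<le> oth S i x" unfolding oth_def by (intro sum_nonneg) (simp add: S)
  have comp: "\<And>x. ((1-\<theta>) *\<^sub>R p + \<theta> *\<^sub>R q) $ x = (1-\<theta>) * p $ x + \<theta> * q $ x" by simp
  have Fle: "\<And>x. (1-\<theta>) * F x (p $ x) + \<theta> * F x (q $ x) \<le> F x (((1-\<theta>) *\<^sub>R p + \<theta> *\<^sub>R q) $ x)"
    unfolding F_def comp
    by (rule Fm_concave(1)[OF u0 u_concave u_diff a]) (use pq th in \<open>auto simp: simplex_nonneg\<close>)
  have Flt: "\<And>x. strict_concave_on {0..} (u x) \<Longrightarrow> p $ x \<noteq> q $ x \<Longrightarrow>
      (1-\<theta>) * F x (p $ x) + \<theta> * F x (q $ x) < F x (((1-\<theta>) *\<^sub>R p + \<theta> *\<^sub>R q) $ x)"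
    unfolding F_def comp
    by (rule Fm_concave(2)[OF u0 u_concave u_diff a]) (use pq th in \<open>auto simp: simplex_nonneg\<close>)
  have cle: "c ((1-\<theta>) *\<^sub>R p + \<theta> *\<^sub>R q) \<le> (1-\<theta>) * c p + \<theta> * c q"
    by (rule convex_onD[OF c_convex]) (use pq th in auto)
  have lhs: "(1-\<theta>) * payoff u c i (S(i:=p)) + \<theta> * payoff u c i (S(i:=q))
     = (1-\<theta>) * (\<Sum>x\<in>UNIV. F x (p $ x)) + \<theta> * (\<Sum>x\<in>UNIV. F x (q $ x)) - ((1-\<theta>) * c p + \<theta> * c q)"
    unfolding payoff_upd F_def by (simp add: algebra_simps)
  have ssplit: "(\<Sum>x\<in>UNIV. (1-\<theta>) * F x (p $ x) + \<theta> * F x (q $ x)) = (1-\<theta>) * (\<Sum>x\<in>UNIV. F x (p $ x)) + \<theta> * (\<Sum>x\<in>UNIV. F x (q $ x))"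
    by (simp only: sum.distrib sum_distrib_left)
  have rhs: "payoff u c i (S(i:=(1-\<theta>) *\<^sub>R p + \<theta> *\<^sub>R q))
     = (\<Sum>x\<in>UNIV. F x (((1-\<theta>) *\<^sub>R p + \<theta> *\<^sub>R q) $ x)) - c ((1-\<theta>) *\<^sub>R p + \<theta> *\<^sub>R q)"
    unfolding payoff_upd F_def by simp
  have sle: "(\<Sum>x\<in>UNIV. (1-\<theta>) * F x (p $ x) + \<theta> * F x (q $ x)) \<le> (\<Sum>x\<in>UNIV. F x (((1-\<theta>) *\<^sub>R p + \<theta> *\<^sub>R q) $ x))"
    by (rule sum_mono) (rule Fle)
  show ?thesis
  proof (cases "strict_convex_on std_simplex c")
    case True
    have "c ((1-\<theta>) *\<^sub>R p + \<theta> *\<^sub>R q) < (1-\<theta>) * c p + \<theta> * c q"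
      by (rule strict_convex_onD[OF True]) (use pq th in auto)
    then show ?thesis unfolding lhs rhs using sle ssplit by linarith
  next
    case False
    then have card: "card {x. \<not> strict_concave_on {0..} (u x)} \<le> 1" using strictness by blast
    obtain x y where xy: "x \<noteq> y" "p $ x \<noteq> q $ x" "p $ y \<noteq> q $ y"
      using simplex_two_diff[OF pq] by blast
    have "\<exists>z. p $ z \<noteq> q $ z \<and> strict_concave_on {0..} (u z)"
    proof (rule ccontr)
      assume "\<not> ?thesis"
      then have "{x, y} \<subseteq> {x. \<not> strict_concave_on {0..} (u x)}" using xy by auto
      then have "card {x, y} \<le> card {x. \<not> strict_concave_on {0..} (u x)}" by (intro card_mono) auto
      then show False using card xy(1) by simp
    qed
    then obtain z where z: "p $ z \<noteq> q $ z" "strict_concave_on {0..} (u z)" by blast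
    have "(\<Sum>x\<in>UNIV. (1-\<theta>) * F x (p $ x) + \<theta> * F x (q $ x)) < (\<Sum>x\<in>UNIV. F x (((1-\<theta>) *\<^sub>R p + \<theta> *\<^sub>R q) $ x))"
      by (rule sum_strict_mono_ex1) (use Fle Flt z in auto)
    then show ?thesis unfolding lhs rhs using cle ssplit by linarith
  qed
qed

lemma NE_strict:
  fixes S :: "'n::finite \<Rightarrow> real^'m"
  assumes "is_NE u c S"
  shows "is_strict_NE u c S"
proof -
  have S: "\<And>j. S j \<in> std_simplex" and best: "\<And>i t. t \<in> std_simplex \<Longrightarrow> payoff u c i (S(i := t)) \<le> payoff u c i S"
    using assms by (auto simp: is_NE_def)
  have "t = S i" if t: "t \<in> std_simplex" and ge: "payoff u c i (S(i := t)) \<ge> payoff u c i S" for i t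
  proof (rule ccontr)
    assume ne: "t \<noteq> S i"
    have "(1 - 1/2) * payoff u c i (S(i:=t)) + (1/2) * payoff u c i (S(i:=S i))
        < payoff u c i (S(i:=(1 - 1/2) *\<^sub>R t + (1/2) *\<^sub>R S i))"
      by (rule payoff_strict) (use S t ne simplex_nonneg in auto)
    moreover have "payoff u c i (S(i:=(1 - 1/2) *\<^sub>R t + (1/2) *\<^sub>R S i)) \<le> payoff u c i S"
      by (rule best) (rule simplex_comb, use t S in auto)
    ultimately show False using ge by simp
  qed
  then show ?thesis using assms by (auto simp: is_strict_NE_def)
qed

end


lemma cont_price_term:
  fixes T s :: "'a::topological_space \<Rightarrow> real" and U :: "real \<Rightarrow> real"
  assumes cT: "continuous_on D T" and cs: "continuous_on D s"
    and b: "\<And>w. w \<in> D \<Longrightarrow> 0 \<le> s w \<and> s w \<le> T w"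
    and cU: "continuous_on {0..} U" and U0: "U 0 = 0"
  shows "continuous_on D (\<lambda>w. U (T w) / T w * s w)"
proof -
  have UT: "continuous_on D (\<lambda>w. U (T w))"
    by (rule continuous_on_compose2[OF cU cT]) (use b in force)
  show ?thesis unfolding continuous_on_def
  proof
    fix w0 assume w0: "w0 \<in> D"
    show "((\<lambda>w. U (T w) / T w * s w) \<longlongrightarrow> U (T w0) / T w0 * s w0) (at w0 within D)"
    proof (cases "T w0 = 0")
      case False
      show ?thesis
        using UT cT cs w0 False unfolding continuous_on_def by (intro tendsto_intros) auto
    next
      case True
      then have s0: "s w0 = 0" using b[OF w0] by simp
      have ev: "eventually (\<lambda>w. norm (U (T w) / T w * s w) \<le> \<bar>U (T w)\<bar>) (at w0 within D)"
        unfolding eventually_at_filter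
      proof (rule always_eventually, intro allI impI)
        fix w assume "w \<noteq> w0" "w \<in> D"
        then have bw: "0 \<le> s w" "s w \<le> T w" using b by auto
        show "norm (U (T w) / T w * s w) \<le> \<bar>U (T w)\<bar>"
        proof (cases "T w = 0")
          case True then show ?thesis by simp
        next
          case False
          then have Tp: "T w > 0" using bw by simp
          have "norm (U (T w) / T w * s w) = \<bar>U (T w)\<bar> * (s w / T w)"
            using Tp bw by (simp add: abs_mult abs_divide)
          also have "\<dots> \<le> \<bar>U (T w)\<bar> * 1"
            using Tp bw by (intro mult_left_mono) auto
          finally show ?thesis by simp
        qed
      qed
      have "((\<lambda>w. \<bar>U (T w)\<bar>) \<longlongrightarrow> \<bar>U (T w0)\<bar>) (at w0 within D)"
        using UT w0 unfolding continuous_on_def by (intro tendsto_intros) auto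
      then have "((\<lambda>w. \<bar>U (T w)\<bar>) \<longlongrightarrow> 0) (at w0 within D)" using True U0 by simp
      from Lim_null_comparison[OF ev this]
      show ?thesis using True s0 by simp
    qed
  qed
qed

definition XX :: "(real^'m::finite^'n::finite) set" where
  "XX = {Z. \<forall>j. Z $ j \<in> std_simplex}"

context market begin

lemma G_cont:
  "continuous_on (XX \<times> XX) (\<lambda>w::(real^'m^'n::finite) \<times> (real^'m^'n). payoff u c i ((($) (fst w))(i := snd w $ i)))"
proof -
  have eq: "\<And>w::(real^'m^'n) \<times> (real^'m^'n). payoff u c i ((($) (fst w))(i := snd w $ i)) =
     (\<Sum>x\<in>UNIV. u x (snd w $ i $ x + (\<Sum>j\<in>UNIV-{i}. fst w $ j $ x)) / (snd w $ i $ x + (\<Sum>j\<in>UNIV-{i}. fst w $ j $ x)) * (snd w $ i $ x)) - c (snd w $ i)"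
    by (simp add: payoff_upd Fm_def oth_def)
  have cc: "continuous_on std_simplex c" by (rule differentiable_imp_continuous_on[OF c_diff])
  show ?thesis unfolding eq
  proof (intro continuous_on_diff continuous_on_sum)
    show "continuous_on (XX \<times> XX) (\<lambda>w::(real^'m^'n) \<times> (real^'m^'n). c (snd w $ i))"
      by (rule continuous_on_compose2[OF cc]) (auto simp: XX_def intro!: continuous_intros)
    fix x
    show "continuous_on (XX \<times> XX) (\<lambda>w::(real^'m^'n) \<times> (real^'m^'n). u x (snd w $ i $ x + (\<Sum>j\<in>UNIV-{i}. fst w $ j $ x)) / (snd w $ i $ x + (\<Sum>j\<in>UNIV-{i}. fst w $ j $ x)) * (snd w $ i $ x))"
    proof (rule cont_price_term)
      show "continuous_on {0..} (u x)" by (rule differentiable_imp_continuous_on[OF u_diff])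
      show "u x 0 = 0" by (rule u0)
      fix w :: "(real^'m^'n) \<times> (real^'m^'n)" assume "w \<in> XX \<times> XX"
      then have "\<And>j. fst w $ j \<in> std_simplex" "\<And>j. snd w $ j \<in> std_simplex" by (auto simp: XX_def)
      then show "0 \<le> snd w $ i $ x \<and> snd w $ i $ x \<le> snd w $ i $ x + (\<Sum>j\<in>UNIV-{i}. fst w $ j $ x)"
        by (auto simp: simplex_nonneg intro!: sum_nonneg)
    qed (intro continuous_intros)+
  qed
qed

end


lemma simplex_closed: "closed (std_simplex :: (real^'m::finite) set)"
proof -
  have "std_simplex = {v::real^'m. \<forall>x. 0 \<le> v $ x} \<inter> {v. (\<Sum>x\<in>UNIV. v $ x) = 1}"
    by (auto simp: std_simplex_def)
  moreover have "closed {v::real^'m. \<forall>x. 0 \<le> v $ x}"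
    by (intro closed_Collect_all closed_Collect_le continuous_intros)
  moreover have "closed {v::real^'m. (\<Sum>x\<in>UNIV. v $ x) = 1}"
    by (intro closed_Collect_eq continuous_intros)
  ultimately show ?thesis by (metis closed_Int)
qed

lemma simplex_norm: "v \<in> std_simplex \<Longrightarrow> norm v \<le> 1"
  using norm_le_l1_cart[of v] by (simp add: simplex_nonneg simplex_sum)

lemma simplex_compact: "compact (std_simplex :: (real^'m::finite) set)"
  using simplex_closed simplex_norm by (auto simp: compact_eq_bounded_closed bounded_iff)

lemma simplex_nonempty: "(\<chi> x. 1 / real CARD('m::finite)) \<in> (std_simplex :: (real^'m) set)"
  by (simp add: std_simplex_def)

lemma XX_closed: "closed (XX :: (real^'m::finite^'n::finite) set)"
  unfolding XX_def
  by (intro closed_Collect_all) (simp add: closed_vimage_vec_nth[OF simplex_closed, unfolded vimage_def])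

lemma XX_compact: "compact (XX :: (real^'m::finite^'n::finite) set)"
unfolding compact_eq_bounded_closed using XX_closed proof (intro conjI)
  show "bounded (XX :: (real^'m::finite^'n::finite) set)" unfolding bounded_iff
  proof (intro exI ballI)
    fix Z :: "real^'m^'n" assume "Z \<in> XX"
    then have nj: "\<And>j. norm (Z $ j) \<le> 1" by (auto simp: XX_def simplex_norm)
    then have "norm Z \<le> (\<Sum>j\<in>UNIV. norm (Z $ j))" unfolding norm_vec_def by (intro L2_set_le_sum) auto
    also have "\<dots> \<le> (\<Sum>j\<in>(UNIV::'n set). 1)" using nj by (intro sum_mono) auto
    finally show "norm Z \<le> real CARD('n)" by simp
  qed
qed

lemma XX_convex: "convex (XX :: (real^'m::finite^'n::finite) set)"
  unfolding convex_def
proof (intro ballI allI impI)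
  fix Z W :: "real^'m^'n" and a b :: real
  assume ZW: "Z \<in> XX" "W \<in> XX" and ab: "0 \<le> a" "0 \<le> b" "a + b = 1"
  have "a *\<^sub>R Z $ j + b *\<^sub>R W $ j \<in> std_simplex" for j
    using simplex_comb[of "Z $ j" "W $ j" b] ZW ab by (simp add: XX_def eq_diff_eq[symmetric])
  then show "a *\<^sub>R Z + b *\<^sub>R W \<in> XX" by (simp add: XX_def)
qed

lemma XX_nonempty: "(\<chi> j. \<chi> x. 1 / real CARD('m::finite)) \<in> (XX :: (real^'m^'n::finite) set)"
  by (simp add: XX_def simplex_nonempty[unfolded vec_lambda_beta])



context market begin

definition isBR :: "'n::finite \<Rightarrow> real^'m^'n \<Rightarrow> real^'m \<Rightarrow> bool" where
  "isBR i Z t \<longleftrightarrow> t \<in> std_simplex \<and>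
     (\<forall>t'\<in>std_simplex. payoff u c i ((($) Z)(i:=t')) \<le> payoff u c i ((($) Z)(i:=t)))"

lemma payoff_cont_t:
  fixes Z :: "real^'m^'n::finite"
  assumes Z: "Z \<in> XX"
  shows "continuous_on std_simplex (\<lambda>t. payoff u c i ((($) Z)(i:=t)))"
proof -
  have "continuous_on std_simplex (\<lambda>t. (\<lambda>w::(real^'m^'n) \<times> (real^'m^'n). payoff u c i ((($) (fst w))(i := snd w $ i))) (Z, \<chi> j. t))"
    by (rule continuous_on_compose2[OF G_cont[of i]]) (use Z in \<open>auto intro!: continuous_intros simp: XX_def\<close>)
  then show ?thesis by simp
qed

lemma BR_ex:
  fixes Z :: "real^'m^'n::finite"
  assumes Z: "Z \<in> XX"
  shows "\<exists>t. isBR i Z t"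
  using continuous_attains_sup[OF simplex_compact _ payoff_cont_t[OF Z, of i]] simplex_nonempty
  unfolding isBR_def by blast

lemma BR_unique:
  fixes Z :: "real^'m^'n::finite"
  assumes Z: "Z \<in> XX" and t1: "isBR i Z t1" and t2: "isBR i Z t2"
  shows "t1 = t2"
proof (rule ccontr)
  assume ne: "t1 \<noteq> t2"
  have in1: "t1 \<in> std_simplex" and in2: "t2 \<in> std_simplex" using t1 t2 by (auto simp: isBR_def)
  have "(1 - 1/2) * payoff u c i ((($) Z)(i:=t1)) + (1/2) * payoff u c i ((($) Z)(i:=t2))
      < payoff u c i ((($) Z)(i:=(1 - 1/2) *\<^sub>R t1 + (1/2) *\<^sub>R t2))"
    by (rule payoff_strict) (use Z in1 in2 ne in \<open>auto simp: XX_def simplex_nonneg\<close>)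
  moreover have "payoff u c i ((($) Z)(i:=(1 - 1/2) *\<^sub>R t1 + (1/2) *\<^sub>R t2)) \<le> payoff u c i ((($) Z)(i:=t1))"
    using t1 simplex_comb[OF in1 in2, of "1/2"] unfolding isBR_def by auto
  moreover have "payoff u c i ((($) Z)(i:=t2)) \<le> payoff u c i ((($) Z)(i:=t1))"
    using t1 in2 unfolding isBR_def by auto
  moreover have "payoff u c i ((($) Z)(i:=t1)) \<le> payoff u c i ((($) Z)(i:=t2))"
    using t2 in1 unfolding isBR_def by auto
  ultimately show False by simp
qed

definition Fmap :: "real^'m^'n::finite \<Rightarrow> real^'m^'n" where
  "Fmap Z = (\<chi> i. THE t. isBR i Z t)"

lemma Fmap_BR:
  fixes Z :: "real^'m^'n::finite"
  assumes Z: "Z \<in> XX"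
  shows "isBR i Z (Fmap Z $ i)"
proof -
  have "\<exists>!t. isBR i Z t" using BR_ex[OF Z] BR_unique[OF Z] by blast
  then show ?thesis unfolding Fmap_def by (simp add: theI')
qed

lemma Fmap_in: "Fmap \<in> (XX :: (real^'m^'n::finite) set) \<rightarrow> XX"
  using Fmap_BR by (auto simp: XX_def isBR_def)

lemma Fmap_graph:
  "(\<lambda>Z. (Z, Fmap Z)) ` (XX :: (real^'m^'n::finite) set) =
   (XX \<times> XX) \<inter> (\<Inter>p\<in>UNIV \<times> std_simplex. {w \<in> XX \<times> XX.
       payoff u c (fst p) ((($) (fst w))(fst p := snd p)) \<le> payoff u c (fst p) ((($) (fst w))(fst p := snd w $ fst p))})"
  (is "?L = ?R")
proof
  show "?L \<subseteq> ?R"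
  proof
    fix w assume "w \<in> ?L"
    then obtain Z where Z: "Z \<in> XX" and w: "w = (Z, Fmap Z)" by auto
    show "w \<in> ?R" using Fmap_in Z Fmap_BR[OF Z] unfolding w isBR_def by auto
  qed
  show "?R \<subseteq> ?L"
  proof
    fix w assume w: "w \<in> ?R"
    obtain Z W where ZW: "w = (Z, W)" by fastforce
    have Z: "Z \<in> XX" and W: "W \<in> XX" using w ZW by auto
    have "isBR i Z (W $ i)" for i using w W ZW unfolding isBR_def XX_def by auto
    then have "W $ i = Fmap Z $ i" for i using BR_unique[OF Z] Fmap_BR[OF Z] by blast
    then have "W = Fmap Z" by (simp add: vec_eq_iff)
    then show "w \<in> ?L" using Z ZW by auto
  qed
qed

lemma Fmap_cont: "continuous_on (XX :: (real^'m^'n::finite) set) Fmap"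
proof (rule continuous_from_closed_graph[OF XX_compact Fmap_in])
  have cXX: "closed ((XX :: (real^'m^'n::finite) set) \<times> XX)" by (intro closed_Times XX_closed)
  have "closed {w \<in> (XX :: (real^'m^'n::finite) set) \<times> XX.
       payoff u c i ((($) (fst w))(i := t')) \<le> payoff u c i ((($) (fst w))(i := snd w $ i))}"
    if t': "t' \<in> std_simplex" for i t'
  proof (rule continuous_on_closed_Collect_le[OF _ G_cont cXX])
    have "continuous_on ((XX :: (real^'m^'n::finite) set) \<times> XX) (\<lambda>w. (\<lambda>w::(real^'m^'n) \<times> (real^'m^'n). payoff u c i ((($) (fst w))(i := snd w $ i))) (fst w, \<chi> j. t'))"
      by (rule continuous_on_compose2[OF G_cont[of i]]) (auto intro!: continuous_intros simp: t' XX_def)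
    then show "continuous_on ((XX :: (real^'m^'n::finite) set) \<times> XX) (\<lambda>w. payoff u c i ((($) (fst w))(i := t')))"
      by simp
  qed
  then show "closed ((\<lambda>Z. (Z, Fmap Z)) ` (XX :: (real^'m^'n::finite) set))"
    unfolding Fmap_graph by (intro closed_Int cXX closed_INT) auto
qed

lemma NE_exists: "\<exists>S :: 'n::finite \<Rightarrow> real^'m. is_NE u c S"
proof -
  obtain Z :: "real^'m^'n" where Z: "Z \<in> XX" and Zfix: "Fmap Z = Z"
    using brouwer[OF XX_compact XX_convex _ Fmap_cont Fmap_in] XX_nonempty by blast
  have "is_NE u c (($) Z)"
    unfolding is_NE_def
  proof (intro conjI allI ballI)
    show "Z $ i \<in> std_simplex" for i using Z by (simp add: XX_def)
    fix i and t :: "real^'m" assume t: "t \<in> std_simplex"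
    have "isBR i Z (Z $ i)" using Fmap_BR[OF Z, of i] Zfix by simp
    then have "payoff u c i ((($) Z)(i := t)) \<le> payoff u c i ((($) Z)(i := Z $ i))"
      using t unfolding isBR_def by auto
    then show "payoff u c i ((($) Z)(i := t)) \<le> payoff u c i (($) Z)" by simp
  qed
  then show ?thesis by blast
qed

end

theorem proposition2:
  fixes u :: "'m::finite \<Rightarrow> real \<Rightarrow> real"
    and c :: "real^'m \<Rightarrow> real"
  assumes u0: "\<And>x. u x 0 = 0"
    and u_nonneg: "\<And>x t. 0 \<le> t \<Longrightarrow> 0 \<le> u x t"
    and c_nonneg: "\<And>s. s \<in> std_simplex \<Longrightarrow> 0 \<le> c s"
    and u_concave: "\<And>x. concave_on {0..} (u x)"
    and u_diff: "\<And>x. u x differentiable_on {0..}"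
    and c_convex: "convex_on std_simplex c"
    and c_diff: "c differentiable_on std_simplex"
    and strictness: "card {x. \<not> strict_concave_on {0..} (u x)} \<le> 1
                     \<or> strict_convex_on std_simplex c"
  shows "(\<exists>S :: 'n::finite \<Rightarrow> real^'m. is_NE u c S)
         \<and> (\<forall>S :: 'n \<Rightarrow> real^'m. is_NE u c S \<longrightarrow> is_strict_NE u c S)"
proof -
  interpret market u c
    by unfold_locales (use assms in auto)
  show ?thesis using NE_exists NE_strict by blast
qed


end
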